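(* The real vector space with basis $J,H,G_a,P_a,J_a,H_a,G_{ab},P_{ab},J^*,H^*,G^*_{ab},P^*_{ab}$ with the following nonzero brackets is a Lie algebra (the double extension of $\operatorname{span}\{P_a,G_a,H_a,J_a\}$ by $\operatorname{span}\{H,J,P_{ab},G_{ab}\}$): $[J,G_a]=\epsilon_{am}G_m$, $[J,P_a]=\epsilon_{am}P_m$, $[G_a,H]=-\epsilon_{am}P_m$, $[G_a,G_b]=\epsilon_{ab}H^*$, $[G_a,P_b]=\epsilon_{ab}J^*$; $[J,J_a]=\epsilon_{am}J_m$, $[J,G_{ab}]=-\epsilon_{m(a}G_{b)m}$, $[J,H_a]=\epsilon_{am}H_m$, $[J,P_{ab}]=-\epsilon_{m(a}P_{b)m}$, $[G_a,G_{bc}]=-\epsilon_{a(b}J_{c)}$, $[G_a,P_{bc}]=-\epsilon_{a(b}H_{c)}$, $[H,J_a]=\epsilon_{am}H_m$, $[H,G_{ab}]=-\epsilon_{m(a}P_{b)m}$, $[P_a,G_{bc}]=-\epsilon_{a(b}H_{c)}$; $[J_a,G_{bc}]=\delta_{a(b}\epsilon_{c)m}G_m$, $[J_a,P_{bc}]=\delta_{a(b}\epsilon_{c)m}P_m$, $[G_{ab},G_{cd}]=\delta_{(a(c}\epsilon_{d)b)}J$, $[G_{ab},H_c]=-\delta_{c(a}\epsilon_{b)m}P_m$, $[G_{ab},P_{cd}]=\delta_{(a(c}\epsilon_{d)b)}H$; $[G_a,J_b]=-\epsilon_{am}P^*_{mb}$, $[G_a,H_b]=-\epsilon_{am}G^*_{mb}$,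 $[P_a,J_b]=-\epsilon_{am}G^*_{mb}$, $[J_a,J_b]=-\epsilon_{ab}H^*$, $[J_a,H_b]=-\epsilon_{ab}J^*$; $[J,P^*_{ab}]=-\epsilon_{m(a}P^*_{b)m}$, $[J,G^*_{ab}]=-\epsilon_{m(a}G^*_{b)m}$, $[H,P^*_{ab}]=-\epsilon_{m(a}G^*_{b)m}$, $[G_{ab},J^*]=-\epsilon_{m(a}G^*_{b)m}$, $[G_{ab},H^*]=-\epsilon_{m(a}P^*_{b)m}$, $[G_{ab},G^*_{cd}]=\epsilon_{(a(c}\delta_{d)b)}J^*$, $[G_{ab},P^*_{cd}]=\epsilon_{(a(c}\delta_{d)b)}H^*$, $[P_{ab},H^*]=-\epsilon_{m(a}G^*_{b)m}$, $[P_{ab},P^*_{cd}]=\epsilon_{(a(c}\delta_{d)b)}J^*$. It admits the invariant metric with nonzero entries $\langle P_a,G_b\rangle=\delta_{ab}$, $\langle H_a,J_b\rangle=-\delta_{ab}$, $\langle H,H^*\rangle=1$, $\langle J,J^*\rangle=1$, $\langle P_{ab},P^*_{cd}\rangle=\delta_{a(c}\delta_{d)b}$, $\langle G_{ab},G^*_{cd}\rangle=\delta_{a(c}\delta_{d)b}$.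
   Context: Indices $a,b,c,d,m\in\{1,2\}$, summed when repeated, $\epsilon_{12}=1$; $G_{ab},P_{ab},G^*_{ab},P^*_{ab}$ are symmetric. Symmetrization without normalization ($T_{(ab)}=T_{ab}+T_{ba}$, nested from outermost to innermost). An invariant metric is a symmetric nondegenerate bilinear form with $\langle[Z,X],Y\rangle+\langle X,[Z,Y]\rangle=0$. *)

theory Defs
  imports "HOL-Analysis.Analysis"
begin

datatype idx = I1 | I2

text \<open>Unordered pairs of indices, labelling the independent components of the
  symmetric generators G_ab, P_ab, G*_ab, P*_ab (G_12 = G_21 etc.).\<close>
datatype sidx = S11 | S12 | S22

definition sp :: "idx \<Rightarrow> idx \<Rightarrow> sidx" where
  "sp a b = (if a = b then (if a = I1 then S11 else S22) else S12)"

definition rep :: "sidx \<Rightarrow> idx \<times> idx" where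
  "rep s = (case s of S11 \<Rightarrow> (I1, I1) | S12 \<Rightarrow> (I1, I2) | S22 \<Rightarrow> (I2, I2))"

definition eps :: "idx \<Rightarrow> idx \<Rightarrow> real" where
  "eps a b = (if a = I1 \<and> b = I2 then 1 else if a = I2 \<and> b = I1 then -1 else 0)"

definition del :: "idx \<Rightarrow> idx \<Rightarrow> real" where
  "del a b = (if a = b then 1 else 0)"

datatype basis = Jc | Hc | Ga idx | Pa idx | Ja idx | Ha idx | Gab sidx | Pab sidx
  | Jst | Hst | Gst sidx | Pst sidx

lemma UNIV_idx: "(UNIV :: idx set) = {I1, I2}"
  using idx.exhaust by auto

lemma UNIV_sidx: "(UNIV :: sidx set) = {S11, S12, S22}"
  using sidx.exhaust by auto

instance idx :: finite
  by standard (simp add: UNIV_idx)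

instance sidx :: finite
  by standard (simp add: UNIV_sidx)

lemma UNIV_basis: "(UNIV :: basis set) = {Jc, Hc, Jst, Hst} \<union> range Ga \<union> range Pa \<union> range Ja
   \<union> range Ha \<union> range Gab \<union> range Pab \<union> range Gst \<union> range Pst"
proof -
  have "x \<in> {Jc, Hc, Jst, Hst} \<union> range Ga \<union> range Pa \<union> range Ja
   \<union> range Ha \<union> range Gab \<union> range Pab \<union> range Gst \<union> range Pst" for x
    by (cases x) simp_all
  then show ?thesis by blast
qed

instance basis :: finite
  by standard (simp add: UNIV_basis)

abbreviation ev :: "basis \<Rightarrow> real ^ basis" where
  "ev X \<equiv> axis X 1"

text \<open>Symmetrised tensor sums, unnormalised: T_(ab) = T_ab + T_ba.
  epsSym a b F = eps_{m(a} F_{b)m} = sum_m (eps_{ma} F_{bm} + eps_{mb} F_{am}).\<close>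
definition epsSym :: "idx \<Rightarrow> idx \<Rightarrow> (sidx \<Rightarrow> basis) \<Rightarrow> real ^ basis" where
  "epsSym a b F = (\<Sum>m\<in>UNIV. eps m a *\<^sub>R ev (F (sp b m)) + eps m b *\<^sub>R ev (F (sp a m)))"

text \<open>delta_{(a(c} eps_{d)b)} and eps_{(a(c} delta_{d)b)}, nested symmetrisation.\<close>
definition deleps :: "idx \<Rightarrow> idx \<Rightarrow> idx \<Rightarrow> idx \<Rightarrow> real" where
  "deleps a b c d = del a c * eps d b + del a d * eps c b + del b c * eps d a + del b d * eps c a"

definition epsdel :: "idx \<Rightarrow> idx \<Rightarrow> idx \<Rightarrow> idx \<Rightarrow> real" where
  "epsdel a b c d = eps a c * del d b + eps a d * del c b + eps b c * del d a + eps b d * del c a"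

text \<open>tab X Y is the bracket [X,Y] as listed in the statement (for the listed order
  of the pair); unlisted ordered pairs give 0.  For symmetric generators the formula
  is evaluated on the representative index pair rep s; all formulas are symmetric in
  the pair, so this is independent of the choice.\<close>
definition tJ :: "basis \<Rightarrow> real ^ basis" where
  "tJ Y = (case Y of
        Ga a \<Rightarrow> (\<Sum>m\<in>UNIV. eps a m *\<^sub>R ev (Ga m))
      | Pa a \<Rightarrow> (\<Sum>m\<in>UNIV. eps a m *\<^sub>R ev (Pa m))
      | Ja a \<Rightarrow> (\<Sum>m\<in>UNIV. eps a m *\<^sub>R ev (Ja m))
      | Ha a \<Rightarrow> (\<Sum>m\<in>UNIV. eps a m *\<^sub>R ev (Ha m))
      | Gab s \<Rightarrow> - epsSym (fst (rep s)) (snd (rep s)) Gab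
      | Pab s \<Rightarrow> - epsSym (fst (rep s)) (snd (rep s)) Pab
      | Pst s \<Rightarrow> - epsSym (fst (rep s)) (snd (rep s)) Pst
      | Gst s \<Rightarrow> - epsSym (fst (rep s)) (snd (rep s)) Gst
      | _ \<Rightarrow> 0)"

definition tG :: "idx \<Rightarrow> basis \<Rightarrow> real ^ basis" where
  "tG a Y = (case Y of
        Hc \<Rightarrow> - (\<Sum>m\<in>UNIV. eps a m *\<^sub>R ev (Pa m))
      | Ga b \<Rightarrow> eps a b *\<^sub>R ev Hst
      | Pa b \<Rightarrow> eps a b *\<^sub>R ev Jst
      | Gab s \<Rightarrow> - (eps a (fst (rep s)) *\<^sub>R ev (Ja (snd (rep s)))
                    + eps a (snd (rep s)) *\<^sub>R ev (Ja (fst (rep s))))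
      | Pab s \<Rightarrow> - (eps a (fst (rep s)) *\<^sub>R ev (Ha (snd (rep s)))
                    + eps a (snd (rep s)) *\<^sub>R ev (Ha (fst (rep s))))
      | Ja b \<Rightarrow> - (\<Sum>m\<in>UNIV. eps a m *\<^sub>R ev (Pst (sp m b)))
      | Ha b \<Rightarrow> - (\<Sum>m\<in>UNIV. eps a m *\<^sub>R ev (Gst (sp m b)))
      | _ \<Rightarrow> 0)"

definition tH :: "basis \<Rightarrow> real ^ basis" where
  "tH Y = (case Y of
        Ja a \<Rightarrow> (\<Sum>m\<in>UNIV. eps a m *\<^sub>R ev (Ha m))
      | Gab s \<Rightarrow> - epsSym (fst (rep s)) (snd (rep s)) Pab
      | Pst s \<Rightarrow> - epsSym (fst (rep s)) (snd (rep s)) Gst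
      | _ \<Rightarrow> 0)"

definition tP :: "idx \<Rightarrow> basis \<Rightarrow> real ^ basis" where
  "tP a Y = (case Y of
        Gab s \<Rightarrow> - (eps a (fst (rep s)) *\<^sub>R ev (Ha (snd (rep s)))
                    + eps a (snd (rep s)) *\<^sub>R ev (Ha (fst (rep s))))
      | Ja b \<Rightarrow> - (\<Sum>m\<in>UNIV. eps a m *\<^sub>R ev (Gst (sp m b)))
      | _ \<Rightarrow> 0)"

definition tJa :: "idx \<Rightarrow> basis \<Rightarrow> real ^ basis" where
  "tJa a Y = (case Y of
        Gab s \<Rightarrow> (\<Sum>m\<in>UNIV. (del a (fst (rep s)) * eps (snd (rep s)) m
                              + del a (snd (rep s)) * eps (fst (rep s)) m) *\<^sub>R ev (Ga m))
      | Pab s \<Rightarrow> (\<Sum>m\<in>UNIV. (del a (fst (rep s)) * eps (snd (rep s)) m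
                              + del a (snd (rep s)) * eps (fst (rep s)) m) *\<^sub>R ev (Pa m))
      | Ja b \<Rightarrow> - (eps a b *\<^sub>R ev Hst)
      | Ha b \<Rightarrow> - (eps a b *\<^sub>R ev Jst)
      | _ \<Rightarrow> 0)"

definition tGab :: "idx \<Rightarrow> idx \<Rightarrow> basis \<Rightarrow> real ^ basis" where
  "tGab a b Y = (case Y of
        Gab t \<Rightarrow> deleps a b (fst (rep t)) (snd (rep t)) *\<^sub>R ev Jc
      | Ha c \<Rightarrow> - (\<Sum>m\<in>UNIV. (del c a * eps b m + del c b * eps a m) *\<^sub>R ev (Pa m))
      | Pab t \<Rightarrow> deleps a b (fst (rep t)) (snd (rep t)) *\<^sub>R ev Hc
      | Jst \<Rightarrow> - epsSym a b Gst
      | Hst \<Rightarrow> - epsSym a b Pst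
      | Gst t \<Rightarrow> epsdel a b (fst (rep t)) (snd (rep t)) *\<^sub>R ev Jst
      | Pst t \<Rightarrow> epsdel a b (fst (rep t)) (snd (rep t)) *\<^sub>R ev Hst
      | _ \<Rightarrow> 0)"

definition tPab :: "idx \<Rightarrow> idx \<Rightarrow> basis \<Rightarrow> real ^ basis" where
  "tPab a b Y = (case Y of
        Hst \<Rightarrow> - epsSym a b Gst
      | Pst t \<Rightarrow> epsdel a b (fst (rep t)) (snd (rep t)) *\<^sub>R ev Jst
      | _ \<Rightarrow> 0)"

definition tab :: "basis \<Rightarrow> basis \<Rightarrow> real ^ basis" where
  "tab X Y = (case X of
     Jc \<Rightarrow> tJ Y
   | Ga a \<Rightarrow> tG a Y
   | Hc \<Rightarrow> tH Y
   | Pa a \<Rightarrow> tP a Y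
   | Ja a \<Rightarrow> tJa a Y
   | Gab s \<Rightarrow> tGab (fst (rep s)) (snd (rep s)) Y
   | Pab s \<Rightarrow> tPab (fst (rep s)) (snd (rep s)) Y
   | _ \<Rightarrow> 0)"

text \<open>Bracket of basis elements: the listed value, completed by antisymmetry
  ([Y,X] = -[X,Y]) for pairs only listed in the other order; all other brackets vanish.\<close>
definition cbr :: "basis \<Rightarrow> basis \<Rightarrow> real ^ basis" where
  "cbr X Y = (if tab X Y \<noteq> 0 then tab X Y else - tab Y X)"

definition lb :: "real ^ basis \<Rightarrow> real ^ basis \<Rightarrow> real ^ basis" where
  "lb x y = (\<Sum>i\<in>UNIV. \<Sum>j\<in>UNIV. (x $ i * y $ j) *\<^sub>R cbr i j)"

definition ddsym :: "sidx \<Rightarrow> sidx \<Rightarrow> real" where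
  "ddsym s t = del (fst (rep s)) (fst (rep t)) * del (snd (rep t)) (snd (rep s))
             + del (fst (rep s)) (snd (rep t)) * del (fst (rep t)) (snd (rep s))"

definition mtab :: "basis \<Rightarrow> basis \<Rightarrow> real" where
  "mtab X Y = (case X of
     Pa a \<Rightarrow> (case Y of Ga b \<Rightarrow> del a b | _ \<Rightarrow> 0)
   | Ha a \<Rightarrow> (case Y of Ja b \<Rightarrow> - del a b | _ \<Rightarrow> 0)
   | Hc \<Rightarrow> (case Y of Hst \<Rightarrow> 1 | _ \<Rightarrow> 0)
   | Jc \<Rightarrow> (case Y of Jst \<Rightarrow> 1 | _ \<Rightarrow> 0)
   | Pab s \<Rightarrow> (case Y of Pst t \<Rightarrow> ddsym s t | _ \<Rightarrow> 0)
   | Gab s \<Rightarrow> (case Y of Gst t \<Rightarrow> ddsym s t | _ \<Rightarrow> 0)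
   | _ \<Rightarrow> 0)"

definition mb :: "basis \<Rightarrow> basis \<Rightarrow> real" where
  "mb X Y = (if mtab X Y \<noteq> 0 then mtab X Y else mtab Y X)"

definition met :: "real ^ basis \<Rightarrow> real ^ basis \<Rightarrow> real" where
  "met x y = (\<Sum>i\<in>UNIV. \<Sum>j\<in>UNIV. x $ i * y $ j * mb i j)"

end

theory Submission
  imports Defs
begin

definition T :: "basis \<Rightarrow> basis \<Rightarrow> (int \<times> basis) list" where
  "T X Y = (case X of
    Jc \<Rightarrow> (case Y of Ga I1 \<Rightarrow> [(1, (Ga I2))] | Ga I2 \<Rightarrow> [(-1, (Ga I1))] | Pa I1 \<Rightarrow> [(1, (Pa I2))] | Pa I2 \<Rightarrow> [(-1, (Pa I1))] | Ja I1 \<Rightarrow> [(1, (Ja I2))] | Ja I2 \<Rightarrow> [(-1, (Ja I1))] | Ha I1 \<Rightarrow> [(1, (Ha I2))] | Ha I2 \<Rightarrow> [(-1, (Ha I1))] | Gab S11 \<Rightarrow> [(2, (Gab S12))] | Gab S12 \<Rightarrow> [(-1, (Gab S11)), (1, (Gab S22))] | Gab S22 \<Rightarrow> [(-2, (Gab S12))] | Pab S11 \<Rightarrow> [(2, (Pab S12))] | Pab S12 \<Rightarrow> [(-1, (Pab S11)), (1, (Pab S22))] | Pab S22 \<Rightarrow> [(-2, (Pab S12))] | Gst S11 \<Rightarrow> [(2, (Gst S12))] | Gst S12 \<Rightarrow> [(-1, (Gst S11)), (1, (Gst S22))] | Gst S22 \<Rightarrow> [(-2, (Gst S12))] | Pst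 S11 \<Rightarrow> [(2, (Pst S12))] | Pst S12 \<Rightarrow> [(-1, (Pst S11)), (1, (Pst S22))] | Pst S22 \<Rightarrow> [(-2, (Pst S12))] | _ \<Rightarrow> [])
  |     Hc \<Rightarrow> (case Y of Ja I1 \<Rightarrow> [(1, (Ha I2))] | Ja I2 \<Rightarrow> [(-1, (Ha I1))] | Gab S11 \<Rightarrow> [(2, (Pab S12))] | Gab S12 \<Rightarrow> [(-1, (Pab S11)), (1, (Pab S22))] | Gab S22 \<Rightarrow> [(-2, (Pab S12))] | Pst S11 \<Rightarrow> [(2, (Gst S12))] | Pst S12 \<Rightarrow> [(-1, (Gst S11)), (1, (Gst S22))] | Pst S22 \<Rightarrow> [(-2, (Gst S12))] | _ \<Rightarrow> [])
  |     Ga I1 \<Rightarrow> (case Y of Hc \<Rightarrow> [(-1, (Pa I2))] | Ga I2 \<Rightarrow> [(1, Hst)] | Pa I2 \<Rightarrow> [(1, Jst)] | Ja I1 \<Rightarrow> [(-1, (Pst S12))] | Ja I2 \<Rightarrow> [(-1, (Pst S22))] | Ha I1 \<Rightarrow> [(-1, (Gst S12))] | Ha I2 \<Rightarrow> [(-1, (Gst S22))] | Gab S12 \<Rightarrow> [(-1, (Ja I1))] | Gab S22 \<Rightarrow> [(-2, (Ja I2))] | Pab S12 \<Rightarrow> [(-1, (Ha I1))] | Pab S22 \<Rightarrow> [(-2, (Ha I2))] | _ \<Rightarrow> [])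
  |     Ga I2 \<Rightarrow> (case Y of Hc \<Rightarrow> [(1, (Pa I1))] | Ga I1 \<Rightarrow> [(-1, Hst)] | Pa I1 \<Rightarrow> [(-1, Jst)] | Ja I1 \<Rightarrow> [(1, (Pst S11))] | Ja I2 \<Rightarrow> [(1, (Pst S12))] | Ha I1 \<Rightarrow> [(1, (Gst S11))] | Ha I2 \<Rightarrow> [(1, (Gst S12))] | Gab S11 \<Rightarrow> [(2, (Ja I1))] | Gab S12 \<Rightarrow> [(1, (Ja I2))] | Pab S11 \<Rightarrow> [(2, (Ha I1))] | Pab S12 \<Rightarrow> [(1, (Ha I2))] | _ \<Rightarrow> [])
  |     Pa I1 \<Rightarrow> (case Y of Ja I1 \<Rightarrow> [(-1, (Gst S12))] | Ja I2 \<Rightarrow> [(-1, (Gst S22))] | Gab S12 \<Rightarrow> [(-1, (Ha I1))] | Gab S22 \<Rightarrow> [(-2, (Ha I2))] | _ \<Rightarrow> [])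
  |     Pa I2 \<Rightarrow> (case Y of Ja I1 \<Rightarrow> [(1, (Gst S11))] | Ja I2 \<Rightarrow> [(1, (Gst S12))] | Gab S11 \<Rightarrow> [(2, (Ha I1))] | Gab S12 \<Rightarrow> [(1, (Ha I2))] | _ \<Rightarrow> [])
  |     Ja I1 \<Rightarrow> (case Y of Ja I2 \<Rightarrow> [(-1, Hst)] | Ha I2 \<Rightarrow> [(-1, Jst)] | Gab S11 \<Rightarrow> [(2, (Ga I2))] | Gab S12 \<Rightarrow> [(-1, (Ga I1))] | Pab S11 \<Rightarrow> [(2, (Pa I2))] | Pab S12 \<Rightarrow> [(-1, (Pa I1))] | _ \<Rightarrow> [])
  |     Ja I2 \<Rightarrow> (case Y of Ja I1 \<Rightarrow> [(1, Hst)] | Ha I1 \<Rightarrow> [(1, Jst)] | Gab S12 \<Rightarrow> [(1, (Ga I2))] | Gab S22 \<Rightarrow> [(-2, (Ga I1))] | Pab S12 \<Rightarrow> [(1, (Pa I2))] | Pab S22 \<Rightarrow> [(-2, (Pa I1))] | _ \<Rightarrow> [])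
  |     Gab S11 \<Rightarrow> (case Y of Jst \<Rightarrow> [(2, (Gst S12))] | Hst \<Rightarrow> [(2, (Pst S12))] | Ha I1 \<Rightarrow> [(-2, (Pa I2))] | Gab S12 \<Rightarrow> [(-2, Jc)] | Pab S12 \<Rightarrow> [(-2, Hc)] | Gst S12 \<Rightarrow> [(2, Jst)] | Pst S12 \<Rightarrow> [(2, Hst)] | _ \<Rightarrow> [])
  |     Gab S12 \<Rightarrow> (case Y of Jst \<Rightarrow> [(-1, (Gst S11)), (1, (Gst S22))] | Hst \<Rightarrow> [(-1, (Pst S11)), (1, (Pst S22))] | Ha I1 \<Rightarrow> [(1, (Pa I1))] | Ha I2 \<Rightarrow> [(-1, (Pa I2))] | Gab S11 \<Rightarrow> [(2, Jc)] | Gab S22 \<Rightarrow> [(-2, Jc)] | Pab S11 \<Rightarrow> [(2, Hc)] | Pab S22 \<Rightarrow> [(-2, Hc)] | Gst S11 \<Rightarrow> [(-2, Jst)] | Gst S22 \<Rightarrow> [(2, Jst)] | Pst S11 \<Rightarrow> [(-2, Hst)] | Pst S22 \<Rightarrow> [(2, Hst)] | _ \<Rightarrow> [])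
  |     Gab S22 \<Rightarrow> (case Y of Jst \<Rightarrow> [(-2, (Gst S12))] | Hst \<Rightarrow> [(-2, (Pst S12))] | Ha I2 \<Rightarrow> [(2, (Pa I1))] | Gab S12 \<Rightarrow> [(2, Jc)] | Pab S12 \<Rightarrow> [(2, Hc)] | Gst S12 \<Rightarrow> [(-2, Jst)] | Pst S12 \<Rightarrow> [(-2, Hst)] | _ \<Rightarrow> [])
  |     Pab S11 \<Rightarrow> (case Y of Hst \<Rightarrow> [(2, (Gst S12))] | Pst S12 \<Rightarrow> [(2, Jst)] | _ \<Rightarrow> [])
  |     Pab S12 \<Rightarrow> (case Y of Hst \<Rightarrow> [(-1, (Gst S11)), (1, (Gst S22))] | Pst S11 \<Rightarrow> [(-2, Jst)] | Pst S22 \<Rightarrow> [(2, Jst)] | _ \<Rightarrow> [])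
  |     Pab S22 \<Rightarrow> (case Y of Hst \<Rightarrow> [(-2, (Gst S12))] | Pst S12 \<Rightarrow> [(-2, Jst)] | _ \<Rightarrow> [])
  | _ \<Rightarrow> [])"

definition mbz :: "basis \<Rightarrow> basis \<Rightarrow> int" where
  "mbz X Y = (case X of
    Jc \<Rightarrow> (case Y of Jst \<Rightarrow> (1) | _ \<Rightarrow> (0))
  |     Hc \<Rightarrow> (case Y of Hst \<Rightarrow> (1) | _ \<Rightarrow> (0))
  |     Jst \<Rightarrow> (case Y of Jc \<Rightarrow> (1) | _ \<Rightarrow> (0))
  |     Hst \<Rightarrow> (case Y of Hc \<Rightarrow> (1) | _ \<Rightarrow> (0))
  |     Ga I1 \<Rightarrow> (case Y of Pa I1 \<Rightarrow> (1) | _ \<Rightarrow> (0))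
  |     Ga I2 \<Rightarrow> (case Y of Pa I2 \<Rightarrow> (1) | _ \<Rightarrow> (0))
  |     Pa I1 \<Rightarrow> (case Y of Ga I1 \<Rightarrow> (1) | _ \<Rightarrow> (0))
  |     Pa I2 \<Rightarrow> (case Y of Ga I2 \<Rightarrow> (1) | _ \<Rightarrow> (0))
  |     Ja I1 \<Rightarrow> (case Y of Ha I1 \<Rightarrow> (-1) | _ \<Rightarrow> (0))
  |     Ja I2 \<Rightarrow> (case Y of Ha I2 \<Rightarrow> (-1) | _ \<Rightarrow> (0))
  |     Ha I1 \<Rightarrow> (case Y of Ja I1 \<Rightarrow> (-1) | _ \<Rightarrow> (0))
  |     Ha I2 \<Rightarrow> (case Y of Ja I2 \<Rightarrow> (-1) | _ \<Rightarrow> (0))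
  |     Gab S11 \<Rightarrow> (case Y of Gst S11 \<Rightarrow> (2) | _ \<Rightarrow> (0))
  |     Gab S12 \<Rightarrow> (case Y of Gst S12 \<Rightarrow> (1) | _ \<Rightarrow> (0))
  |     Gab S22 \<Rightarrow> (case Y of Gst S22 \<Rightarrow> (2) | _ \<Rightarrow> (0))
  |     Pab S11 \<Rightarrow> (case Y of Pst S11 \<Rightarrow> (2) | _ \<Rightarrow> (0))
  |     Pab S12 \<Rightarrow> (case Y of Pst S12 \<Rightarrow> (1) | _ \<Rightarrow> (0))
  |     Pab S22 \<Rightarrow> (case Y of Pst S22 \<Rightarrow> (2) | _ \<Rightarrow> (0))
  |     Gst S11 \<Rightarrow> (case Y of Gab S11 \<Rightarrow> (2) | _ \<Rightarrow> (0))
  |     Gst S12 \<Rightarrow> (case Y of Gab S12 \<Rightarrow> (1) | _ \<Rightarrow> (0))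
  |     Gst S22 \<Rightarrow> (case Y of Gab S22 \<Rightarrow> (2) | _ \<Rightarrow> (0))
  |     Pst S11 \<Rightarrow> (case Y of Pab S11 \<Rightarrow> (2) | _ \<Rightarrow> (0))
  |     Pst S12 \<Rightarrow> (case Y of Pab S12 \<Rightarrow> (1) | _ \<Rightarrow> (0))
  |     Pst S22 \<Rightarrow> (case Y of Pab S22 \<Rightarrow> (2) | _ \<Rightarrow> (0)))"

definition pt :: "basis \<Rightarrow> basis" where "pt X = (case X of Jc \<Rightarrow> Jst | Hc \<Rightarrow> Hst | Jst \<Rightarrow> Jc | Hst \<Rightarrow> Hc | Ga I1 \<Rightarrow> (Pa I1) | Ga I2 \<Rightarrow> (Pa I2) | Pa I1 \<Rightarrow> (Ga I1) | Pa I2 \<Rightarrow> (Ga I2) | Ja I1 \<Rightarrow> (Ha I1) | Ja I2 \<Rightarrow> (Ha I2) | Ha I1 \<Rightarrow> (Ja I1) | Ha I2 \<Rightarrow> (Ja I2) | Gab S11 \<Rightarrow> (Gst S11) | Gab S12 \<Rightarrow> (Gst S12) | Gab S22 \<Rightarrow> (Gst S22) | Pab S11 \<Rightarrow> (Pst S11) | Pab S12 \<Rightarrow> (Pst S12) | Pab S22 \<Rightarrow> (Pst S22) | Gst S11 \<Rightarrow> (Gab S11) | Gst S12 \<Rightarrow> (Gab S12) | Gst S22 \<Rightarrow> (Gab S22) | Pst S11 \<Rightarrow> (Pab S11) | Pst S12 \<Rightarrow> (Pab S12) | Pst S22 \<Rightarrow> (Pab S22))"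

definition bl :: "basis list" where "bl = [Jc, Hc, Jst, Hst, (Ga I1), (Ga I2), (Pa I1), (Pa I2), (Ja I1), (Ja I2), (Ha I1), (Ha I2), (Gab S11), (Gab S12), (Gab S22), (Pab S11), (Pab S12), (Pab S22), (Gst S11), (Gst S12), (Gst S22), (Pst S11), (Pst S12), (Pst S22)]"

lemma all_basis: "(\<forall>X. P X) \<longleftrightarrow> P Jc \<and> P Hc \<and> P Jst \<and> P Hst \<and> P (Ga I1) \<and> P (Ga I2) \<and> P (Pa I1) \<and> P (Pa I2)
  \<and> P (Ja I1) \<and> P (Ja I2) \<and> P (Ha I1) \<and> P (Ha I2) \<and> P (Gab S11) \<and> P (Gab S12) \<and> P (Gab S22)
  \<and> P (Pab S11) \<and> P (Pab S12) \<and> P (Pab S22) \<and> P (Gst S11) \<and> P (Gst S12) \<and> P (Gst S22)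
  \<and> P (Pst S11) \<and> P (Pst S12) \<and> P (Pst S22)"
  apply (rule iffI, simp)
  apply clarify
  subgoal for X by (cases X) (metis idx.exhaust sidx.exhaust)+
  done

definition coef :: "basis \<Rightarrow> (int \<times> basis) list \<Rightarrow> int" where
  "coef k xs = sum_list (map (\<lambda>(c,W). if W = k then c else 0) xs)"

lemma coef_simps[simp]: "coef k [] = 0" "coef k ((c,W)#xs) = (if W = k then c else 0) + coef k xs"
  by (simp_all add: coef_def)

lemma tab_T: "\<forall>X Y k. tab X Y $ k = of_int (coef k (T X Y))"
  unfolding all_basis
  by (simp add: tab_def tJ_def tG_def tH_def tP_def tJa_def tGab_def tPab_def T_def epsSym_def
     UNIV_idx eps_def del_def deleps_def epsdel_def rep_def sp_def axis_def)
definition Lc :: "basis \<Rightarrow> basis \<Rightarrow> (int \<times> basis) list" where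
  "Lc X Y = (if T X Y \<noteq> [] then T X Y else map (\<lambda>(c,W). (-c,W)) (T Y X))"

definition comp :: "basis \<Rightarrow> (int \<times> basis) list \<Rightarrow> (int \<times> basis) list" where
  "comp i xs = concat (map (\<lambda>(c,W). map (\<lambda>(d,U). (c*d,U)) (Lc i W)) xs)"

definition jac :: "basis \<Rightarrow> basis \<Rightarrow> basis \<Rightarrow> (int \<times> basis) list" where
  "jac i j k = comp i (Lc j k) @ comp j (Lc k i) @ comp k (Lc i j)"

definition okj :: "basis \<Rightarrow> basis \<Rightarrow> basis \<Rightarrow> bool" where
  "okj i j k = (let xs = jac i j k in list_all (\<lambda>l. coef l xs = 0) (map snd xs))"

lemma chk1: "list_all (\<lambda>X. list_all (\<lambda>Y. T X Y \<noteq> [] \<longrightarrow> coef (snd (hd (T X Y))) (T X Y) \<noteq> 0) bl) bl"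
  by code_simp

lemma chk_jac: "list_all (\<lambda>i. list_all (\<lambda>j. list_all (\<lambda>k. okj i j k) bl) bl) bl"
  by code_simp
lemma chk_anti: "list_all (\<lambda>X. list_all (\<lambda>Y. list_all (\<lambda>k. coef k (Lc X Y) + coef k (Lc Y X) = 0) (map snd (Lc X Y @ Lc Y X))) bl) bl"
  by code_simp

definition dotL :: "(int \<times> basis) list \<Rightarrow> basis \<Rightarrow> int" where
  "dotL xs c = sum_list (map (\<lambda>(d,W). d * mbz W c) xs)"

lemma chk_inv: "list_all (\<lambda>a. list_all (\<lambda>b. list_all (\<lambda>c. dotL (Lc a b) c + dotL (Lc a c) b = 0) bl) bl) bl"
  by code_simp

lemma chk_sym: "list_all (\<lambda>X. list_all (\<lambda>Y. mbz X Y = mbz Y X) bl) bl"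
  by code_simp

lemma chk_pt: "list_all (\<lambda>k. list_all (\<lambda>i. (i \<noteq> k \<longrightarrow> mbz i (pt k) = 0) \<and> mbz k (pt k) \<noteq> 0) bl) bl"
  by code_simp

lemma mb_mbz: "\<forall>X Y. mb X Y = real_of_int (mbz X Y)"
  unfolding all_basis
  by (simp add: mb_def mtab_def mbz_def ddsym_def rep_def del_def)

lemma bl_UNIV: "set bl = UNIV"
proof -
  have "\<forall>x. x \<in> set bl" unfolding all_basis by (simp add: bl_def)
  then show ?thesis by blast
qed

lemma list_all_bl: "list_all P bl \<longleftrightarrow> (\<forall>x. P x)"
  by (simp add: list_all_iff bl_UNIV)

lemma coef_notin: "k \<notin> set (map snd xs) \<Longrightarrow> coef k xs = 0"
  by (induction xs) auto

lemma coef_append[simp]: "coef k (xs @ ys) = coef k xs + coef k ys"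
  by (simp add: coef_def)

lemma coef_scale[simp]: "coef k (map (\<lambda>(d,U). (c*d,U)) xs) = c * coef k xs"
  by (induction xs) (auto simp: algebra_simps)

lemma coef_neg[simp]: "coef k (map (\<lambda>(c,W). (-c,W)) xs) = - coef k xs"
  by (induction xs) auto

lemma sum_coef: "(\<Sum>m\<in>UNIV. real_of_int (coef m xs) * f m) = (\<Sum>(c,W)\<leftarrow>xs. real_of_int c * f W)"
proof (induction xs)
  case Nil then show ?case by simp
next
  case (Cons p xs)
  obtain c W where p: "p = (c,W)" by (cases p)
  have "(\<Sum>m\<in>UNIV. real_of_int (coef m (p#xs)) * f m)
     = (\<Sum>m\<in>UNIV. (if W = m then real_of_int c * f m else 0)) + (\<Sum>m\<in>UNIV. real_of_int (coef m xs) * f m)"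
  proof -
    have "\<And>m. real_of_int (coef m (p#xs)) * f m = (if W = m then real_of_int c * f m else 0) + real_of_int (coef m xs) * f m"
      by (simp add: p distrib_right)
    then show ?thesis by (simp add: sum.distrib)
  qed
  also have "\<dots> = real_of_int c * f W + (\<Sum>(c,W)\<leftarrow>xs. real_of_int c * f W)"
    using Cons by simp
  finally show ?case by (simp add: p)
qed

lemma coef_comp: "(\<Sum>(c,W)\<leftarrow>xs. real_of_int c * real_of_int (coef l (Lc i W))) = real_of_int (coef l (comp i xs))"
  by (induction xs) (auto simp: comp_def)

lemma tab_zero: "tab X Y = 0 \<longleftrightarrow> T X Y = []"
proof
  assume "tab X Y = 0"
  then have "\<forall>k. coef k (T X Y) = 0" using tab_T by (metis of_int_eq_0_iff zero_index)
  then show "T X Y = []" using chk1 unfolding list_all_bl by blast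
next
  assume "T X Y = []"
  then show "tab X Y = 0" using tab_T by (simp add: vec_eq_iff)
qed

definition Cf :: "basis \<Rightarrow> basis \<Rightarrow> basis \<Rightarrow> real" where
  "Cf i j k = real_of_int (coef k (Lc i j))"

lemma cbr_Cf: "cbr X Y $ k = Cf X Y k"
  by (simp add: cbr_def Cf_def Lc_def tab_zero tab_T)
lemma lb_comp: "lb x y $ l = (\<Sum>i\<in>UNIV. \<Sum>j\<in>UNIV. x$i * y$j * Cf i j l)"
  by (simp add: lb_def cbr_Cf)

lemma Cf_anti: "Cf j i l = - Cf i j l"
proof -
  have "coef l (Lc i j) + coef l (Lc j i) = 0"
  proof (cases "l \<in> set (map snd (Lc i j @ Lc j i))")
    case True then show ?thesis using chk_anti by (simp add: list_all_iff bl_UNIV)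
  next
    case False then show ?thesis by (simp add: coef_notin)
  qed
  then show ?thesis unfolding Cf_def by (metis add_eq_0_iff of_int_minus)
qed

lemma jac0: "(\<Sum>m\<in>UNIV. Cf j k m * Cf i m l + Cf k i m * Cf j m l + Cf i j m * Cf k m l) = 0"
proof -
  have "coef l (jac i j k) = 0"
  proof (cases "l \<in> set (map snd (jac i j k))")
    case True
    have "\<forall>i j k. okj i j k" using chk_jac unfolding list_all_bl .
    then show ?thesis using True unfolding okj_def Let_def list_all_iff by blast
  next
    case False then show ?thesis by (simp add: coef_notin)
  qed
  moreover have "(\<Sum>m\<in>UNIV. Cf j k m * Cf i m l + Cf k i m * Cf j m l + Cf i j m * Cf k m l) = real_of_int (coef l (jac i j k))"
    by (simp add: sum.distrib Cf_def sum_coef coef_comp jac_def)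
  ultimately show ?thesis by simp
qed

lemma tri: "(\<Sum>a\<in>UNIV. \<Sum>m\<in>UNIV. u a * (\<Sum>b\<in>UNIV. \<Sum>c\<in>UNIV. v b * w c * F b c m) * G a m)
  = (\<Sum>a\<in>UNIV. \<Sum>b\<in>UNIV. \<Sum>c\<in>UNIV. u a * v b * w c * (\<Sum>m\<in>UNIV. F b c m * G a m))"
  (is "?L = ?R") for u v w :: "'a::finite \<Rightarrow> real"
proof -
  have "?L = (\<Sum>a\<in>UNIV. \<Sum>m\<in>UNIV. \<Sum>b\<in>UNIV. \<Sum>c\<in>UNIV. u a * v b * w c * (F b c m * G a m))"
    by (simp add: sum_distrib_left sum_distrib_right mult_ac)
  also have "\<dots> = (\<Sum>a\<in>UNIV. \<Sum>b\<in>UNIV. \<Sum>m\<in>UNIV. \<Sum>c\<in>UNIV. u a * v b * w c * (F b c m * G a m))"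
    by (rule sum.cong[OF refl], rule sum.swap)
  also have "\<dots> = (\<Sum>a\<in>UNIV. \<Sum>b\<in>UNIV. \<Sum>c\<in>UNIV. \<Sum>m\<in>UNIV. u a * v b * w c * (F b c m * G a m))"
    by (rule sum.cong[OF refl], rule sum.cong[OF refl], rule sum.swap)
  also have "\<dots> = ?R" by (simp add: sum_distrib_left)
  finally show ?thesis .
qed

lemma swap3: "(\<Sum>a\<in>UNIV. \<Sum>b\<in>UNIV. \<Sum>c\<in>UNIV. f a b c) = (\<Sum>b\<in>UNIV. \<Sum>c\<in>UNIV. \<Sum>a\<in>UNIV. f a b c)"
  for f :: "'a::finite \<Rightarrow> 'a \<Rightarrow> 'a \<Rightarrow> real"
proof -
  have "(\<Sum>a\<in>UNIV. \<Sum>b\<in>UNIV. \<Sum>c\<in>UNIV. f a b c) = (\<Sum>b\<in>UNIV. \<Sum>a\<in>UNIV. \<Sum>c\<in>UNIV. f a b c)"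
    by (rule sum.swap)
  also have "\<dots> = (\<Sum>b\<in>UNIV. \<Sum>c\<in>UNIV. \<Sum>a\<in>UNIV. f a b c)"
    by (rule sum.cong[OF refl], rule sum.swap)
  finally show ?thesis .
qed

lemma jacobi: "lb x (lb y z) + lb y (lb z x) + lb z (lb x y) = 0"
proof (subst vec_eq_iff, rule allI)
  fix l
  have 1: "lb x (lb y z) $ l = (\<Sum>i\<in>UNIV. \<Sum>j\<in>UNIV. \<Sum>k\<in>UNIV. x$i * y$j * z$k * (\<Sum>m\<in>UNIV. Cf j k m * Cf i m l))"
    by (simp add: lb_comp tri)
  have "lb y (lb z x) $ l = (\<Sum>j\<in>UNIV. \<Sum>k\<in>UNIV. \<Sum>i\<in>UNIV. y$j * z$k * x$i * (\<Sum>m\<in>UNIV. Cf k i m * Cf j m l))"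
    by (simp add: lb_comp tri)
  also have "\<dots> = (\<Sum>i\<in>UNIV. \<Sum>j\<in>UNIV. \<Sum>k\<in>UNIV. x$i * y$j * z$k * (\<Sum>m\<in>UNIV. Cf k i m * Cf j m l))"
    by (subst swap3[symmetric]) (simp add: mult_ac)
  finally have 2: "lb y (lb z x) $ l = \<dots>" .
  have "lb z (lb x y) $ l = (\<Sum>k\<in>UNIV. \<Sum>i\<in>UNIV. \<Sum>j\<in>UNIV. z$k * x$i * y$j * (\<Sum>m\<in>UNIV. Cf i j m * Cf k m l))"
    by (simp add: lb_comp tri)
  also have "\<dots> = (\<Sum>i\<in>UNIV. \<Sum>j\<in>UNIV. \<Sum>k\<in>UNIV. x$i * y$j * z$k * (\<Sum>m\<in>UNIV. Cf i j m * Cf k m l))"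
    by (subst swap3) (simp add: mult_ac)
  finally have 3: "lb z (lb x y) $ l = \<dots>" .
  have "(lb x (lb y z) + lb y (lb z x) + lb z (lb x y)) $ l =
     (\<Sum>i\<in>UNIV. \<Sum>j\<in>UNIV. \<Sum>k\<in>UNIV. x$i * y$j * z$k *
        (\<Sum>m\<in>UNIV. Cf j k m * Cf i m l + Cf k i m * Cf j m l + Cf i j m * Cf k m l))"
    unfolding vector_add_component 1 2 3
    by (simp add: sum.distrib distrib_left)
  also have "\<dots> = 0" by (simp add: jac0)
  finally show "(lb x (lb y z) + lb y (lb z x) + lb z (lb x y)) $ l = 0 $ l" by simp
qed
lemma lb_add1: "lb (x + y) z = lb x z + lb y z"
  by (simp add: vec_eq_iff lb_comp distrib_right sum.distrib)
lemma lb_scale1: "lb (c *\<^sub>R x) y = c *\<^sub>R lb x y"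
  by (simp add: vec_eq_iff lb_comp sum_distrib_left mult_ac)
lemma lb_add2: "lb x (y + z) = lb x y + lb x z"
  by (simp add: vec_eq_iff lb_comp distrib_right distrib_left sum.distrib)
lemma lb_scale2: "lb x (c *\<^sub>R y) = c *\<^sub>R lb x y"
  by (simp add: vec_eq_iff lb_comp sum_distrib_left mult_ac)

lemma lb_alt: "lb x x = 0"
proof (subst vec_eq_iff, rule allI)
  fix l
  let ?S = "(\<Sum>i\<in>UNIV. \<Sum>j\<in>UNIV. x$i * x$j * Cf i j l)"
  have "?S = (\<Sum>j\<in>UNIV. \<Sum>i\<in>UNIV. x$i * x$j * Cf i j l)" by (rule sum.swap)
  also have "\<dots> = (\<Sum>j\<in>UNIV. \<Sum>i\<in>UNIV. - (x$j * x$i * Cf j i l))"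
    apply (intro sum.cong refl)
    subgoal for j i by (simp add: Cf_anti[of i j l])
    done
  also have "\<dots> = - ?S" by (simp add: sum_negf)
  finally have "?S = 0" by simp
  then show "lb x x $ l = 0 $ l" by (simp add: lb_comp)
qed

lemma mb_sym: "mb i j = mb j i"
  using chk_sym mb_mbz unfolding list_all_bl by simp

lemma met_sym: "met x y = met y x"
  unfolding met_def by (subst sum.swap) (simp add: mb_sym mult_ac)

lemma met_ev: "met x (ev b) = (\<Sum>i\<in>UNIV. x$i * mb i b)"
proof -
  have "met x (ev b) = (\<Sum>i\<in>UNIV. \<Sum>j\<in>UNIV. if j = b then x$i * mb i j else 0)"
    unfolding met_def by (rule sum.cong[OF refl], rule sum.cong[OF refl]) (simp add: axis_def)
  then show ?thesis by simp
qed

lemma met_nondeg: "(\<forall>y. met x y = 0) \<Longrightarrow> x = 0"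
proof (subst vec_eq_iff, intro allI)
  fix k assume h: "\<forall>y. met x y = 0"
  have p: "\<forall>k i. (i \<noteq> k \<longrightarrow> mbz i (pt k) = 0) \<and> mbz k (pt k) \<noteq> 0"
    using chk_pt unfolding list_all_bl .
  have "met x (ev (pt k)) = (\<Sum>i\<in>UNIV. if i = k then x$k * mb k (pt k) else 0)"
    unfolding met_ev by (rule sum.cong[OF refl]) (use p mb_mbz in auto)
  also have "\<dots> = x$k * mb k (pt k)" by simp
  finally have "x$k * mb k (pt k) = 0" using h by simp
  moreover have "mb k (pt k) \<noteq> 0" using p mb_mbz by simp
  ultimately show "x$k = 0$k" by simp
qed

lemma dotL_real: "(\<Sum>(c,W)\<leftarrow>xs. real_of_int c * real_of_int (mbz W k)) = real_of_int (dotL xs k)"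
  by (induction xs) (auto simp: dotL_def)

lemma dot_form: "(\<Sum>m\<in>UNIV. Cf a b m * mb m c) = real_of_int (dotL (Lc a b) c)"
  by (simp add: Cf_def mb_mbz sum_coef dotL_real)

lemma inv0: "(\<Sum>m\<in>UNIV. Cf a b m * mb m c) + (\<Sum>m\<in>UNIV. mb b m * Cf a c m) = 0"
proof -
  have "dotL (Lc a b) c + dotL (Lc a c) b = 0" using chk_inv unfolding list_all_bl by simp
  moreover have "(\<Sum>m\<in>UNIV. Cf a b m * mb m c) = real_of_int (dotL (Lc a b) c)"
    by (rule dot_form)
  moreover have "(\<Sum>m\<in>UNIV. mb b m * Cf a c m) = (\<Sum>m\<in>UNIV. Cf a c m * mb m b)"
    by (intro sum.cong refl) (simp add: mb_sym[of b] mult.commute)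
  moreover have "\<dots> = real_of_int (dotL (Lc a c) b)"
    by (rule dot_form)
  ultimately show ?thesis by (metis of_int_add of_int_0)
qed

lemma perm4a: "(\<Sum>i\<in>UNIV. \<Sum>j\<in>UNIV. \<Sum>a\<in>UNIV. \<Sum>b\<in>UNIV. f i j a b)
   = (\<Sum>a\<in>UNIV. \<Sum>b\<in>UNIV. \<Sum>j\<in>UNIV. \<Sum>i\<in>UNIV. f i j a b)"
  for f :: "'a::finite \<Rightarrow> 'a \<Rightarrow> 'a \<Rightarrow> 'a \<Rightarrow> real"
proof -
  have "(\<Sum>i\<in>UNIV. \<Sum>j\<in>UNIV. \<Sum>a\<in>UNIV. \<Sum>b\<in>UNIV. f i j a b)
      = (\<Sum>i\<in>UNIV. \<Sum>a\<in>UNIV. \<Sum>b\<in>UNIV. \<Sum>j\<in>UNIV. f i j a b)"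
    by (rule sum.cong[OF refl], rule swap3)
  also have "\<dots> = (\<Sum>a\<in>UNIV. \<Sum>b\<in>UNIV. \<Sum>i\<in>UNIV. \<Sum>j\<in>UNIV. f i j a b)"
    by (rule swap3)
  also have "\<dots> = (\<Sum>a\<in>UNIV. \<Sum>b\<in>UNIV. \<Sum>j\<in>UNIV. \<Sum>i\<in>UNIV. f i j a b)"
    by (rule sum.cong[OF refl], rule sum.cong[OF refl], rule sum.swap)
  finally show ?thesis .
qed

lemma perm4b: "(\<Sum>i\<in>UNIV. \<Sum>j\<in>UNIV. \<Sum>a\<in>UNIV. \<Sum>c\<in>UNIV. f i j a c)
   = (\<Sum>a\<in>UNIV. \<Sum>i\<in>UNIV. \<Sum>c\<in>UNIV. \<Sum>j\<in>UNIV. f i j a c)"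
  for f :: "'a::finite \<Rightarrow> 'a \<Rightarrow> 'a \<Rightarrow> 'a \<Rightarrow> real"
proof -
  have "(\<Sum>i\<in>UNIV. \<Sum>j\<in>UNIV. \<Sum>a\<in>UNIV. \<Sum>c\<in>UNIV. f i j a c)
      = (\<Sum>i\<in>UNIV. \<Sum>a\<in>UNIV. \<Sum>c\<in>UNIV. \<Sum>j\<in>UNIV. f i j a c)"
    by (rule sum.cong[OF refl], rule swap3)
  also have "\<dots> = (\<Sum>a\<in>UNIV. \<Sum>i\<in>UNIV. \<Sum>c\<in>UNIV. \<Sum>j\<in>UNIV. f i j a c)"
    by (rule sum.swap)
  finally show ?thesis .
qed

lemma met_inv: "met (lb z x) y + met x (lb z y) = 0"
proof -
  have "met (lb z x) y = (\<Sum>i\<in>UNIV. \<Sum>j\<in>UNIV. \<Sum>a\<in>UNIV. \<Sum>b\<in>UNIV. z$a * x$b * y$j * (Cf a b i * mb i j))"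
    by (simp add: met_def lb_comp sum_distrib_left sum_distrib_right mult_ac)
  also have "\<dots> = (\<Sum>a\<in>UNIV. \<Sum>b\<in>UNIV. \<Sum>j\<in>UNIV. \<Sum>i\<in>UNIV. z$a * x$b * y$j * (Cf a b i * mb i j))"
    by (rule perm4a)
  also have "\<dots> = (\<Sum>a\<in>UNIV. \<Sum>b\<in>UNIV. \<Sum>c\<in>UNIV. z$a * x$b * y$c * (\<Sum>m\<in>UNIV. Cf a b m * mb m c))"
    by (simp add: sum_distrib_left)
  finally have 1: "met (lb z x) y = \<dots>" .
  have "met x (lb z y) = (\<Sum>i\<in>UNIV. \<Sum>j\<in>UNIV. \<Sum>a\<in>UNIV. \<Sum>c\<in>UNIV. z$a * x$i * y$c * (mb i j * Cf a c j))"
    by (simp add: met_def lb_comp sum_distrib_left sum_distrib_right mult_ac)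
  also have "\<dots> = (\<Sum>a\<in>UNIV. \<Sum>i\<in>UNIV. \<Sum>c\<in>UNIV. \<Sum>j\<in>UNIV. z$a * x$i * y$c * (mb i j * Cf a c j))"
    by (rule perm4b)
  also have "\<dots> = (\<Sum>a\<in>UNIV. \<Sum>b\<in>UNIV. \<Sum>c\<in>UNIV. z$a * x$b * y$c * (\<Sum>m\<in>UNIV. mb b m * Cf a c m))"
    by (simp add: sum_distrib_left)
  finally have 2: "met x (lb z y) = \<dots>" .
  have "met (lb z x) y + met x (lb z y) = (\<Sum>a\<in>UNIV. \<Sum>b\<in>UNIV. \<Sum>c\<in>UNIV. z$a * x$b * y$c *
     ((\<Sum>m\<in>UNIV. Cf a b m * mb m c) + (\<Sum>m\<in>UNIV. mb b m * Cf a c m)))"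
    unfolding 1 2 by (simp add: sum.distrib distrib_left)
  also have "\<dots> = 0" by (simp add: inv0)
  finally show ?thesis .
qed

theorem mainTheorem11:
  shows "(\<forall>x y z. lb (x + y) z = lb x z + lb y z)
       \<and> (\<forall>(c::real) x y. lb (c *\<^sub>R x) y = c *\<^sub>R lb x y)
       \<and> (\<forall>x y z. lb x (y + z) = lb x y + lb x z)
       \<and> (\<forall>(c::real) x y. lb x (c *\<^sub>R y) = c *\<^sub>R lb x y)
       \<and> (\<forall>x. lb x x = 0)
       \<and> (\<forall>x y z. lb x (lb y z) + lb y (lb z x) + lb z (lb x y) = 0)
       \<and> (\<forall>x y. met x y = met y x)
       \<and> (\<forall>x. (\<forall>y. met x y = 0) \<longrightarrow> x = 0)
       \<and> (\<forall>x y z. met (lb z x) y + met x (lb z y) = 0)"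
proof (intro conjI)
  show "\<forall>x y z. lb (x + y) z = lb x z + lb y z" using lb_add1 by blast
  show "\<forall>(c::real) x y. lb (c *\<^sub>R x) y = c *\<^sub>R lb x y" using lb_scale1 by blast
  show "\<forall>x y z. lb x (y + z) = lb x y + lb x z" using lb_add2 by blast
  show "\<forall>(c::real) x y. lb x (c *\<^sub>R y) = c *\<^sub>R lb x y" using lb_scale2 by blast
  show "\<forall>x. lb x x = 0" using lb_alt by blast
  show "\<forall>x y z. lb x (lb y z) + lb y (lb z x) + lb z (lb x y) = 0" using jacobi by blast
  show "\<forall>x y. met x y = met y x" using met_sym by blast
  show "\<forall>x. (\<forall>y. met x y = 0) \<longrightarrow> x = 0" using met_nondeg by blast
  show "\<forall>x y z. met (lb z x) y + met x (lb z y) = 0" using met_inv by blast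
qed
end
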